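(* Let $p$ be an odd prime, $e\geq 2$, and $N$ cyclic of order $p^e$. Every transitive subgroup of $\mathrm{Hol}(N)$ has an element of order $p^e$.
   Context: $\mathrm{Hol}(N)=N\rtimes\mathrm{Aut}(N)$ acts on $N$ by $(\eta,\alpha)\cdot x=\eta\,\alpha(x)$; a subgroup is transitive if it acts transitively on $N$. *)

theory Defs
  imports "HOL-Algebra.Bij" "HOL-Algebra.Elementary_Groups" "HOL-Algebra.Multiplicative_Group" "HOL-Computational_Algebra.Primes"
begin

text \<open>Elements are pairs (eta, alpha) with
  eta in N and alpha an automorphism of N (extensional on the carrier, as in
  the library's AutoGroup). Multiplication:
  (eta, alpha)(eta', beta) = (eta * alpha(eta'), alpha o beta), so that the
  action (eta, alpha) . x = eta * alpha(x) is a left action.\<close>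

definition holomorph :: "('a, 'b) monoid_scheme \<Rightarrow> ('a \<times> ('a \<Rightarrow> 'a)) monoid" where
  "holomorph N =
    \<lparr>carrier = carrier N \<times> auto N,
     Group.monoid.mult = (\<lambda>(\<eta>, \<alpha>) (\<eta>', \<beta>). (\<eta> \<otimes>\<^bsub>N\<^esub> \<alpha> \<eta>', compose (carrier N) \<alpha> \<beta>)),
     Group.monoid.one = (\<one>\<^bsub>N\<^esub>, \<lambda>x\<in>carrier N. x)\<rparr>"

definition hol_action :: "('a, 'b) monoid_scheme \<Rightarrow> 'a \<times> ('a \<Rightarrow> 'a) \<Rightarrow> 'a \<Rightarrow> 'a" where
  "hol_action N h x = fst h \<otimes>\<^bsub>N\<^esub> snd h x"

definition transitive_on_N :: "('a, 'b) monoid_scheme \<Rightarrow> ('a \<times> ('a \<Rightarrow> 'a)) set \<Rightarrow> bool" where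
  "transitive_on_N N H \<longleftrightarrow>
     (\<forall>x\<in>carrier N. \<forall>y\<in>carrier N. \<exists>h\<in>H. hol_action N h x = y)"

end

theory Submission
  imports Defs
begin


context group begin

lemma auto_closed: "f \<in> auto G \<Longrightarrow> x \<in> carrier G \<Longrightarrow> f x \<in> carrier G"
  by (auto simp: auto_def hom_def)

lemma auto_mult: "f \<in> auto G \<Longrightarrow> x \<in> carrier G \<Longrightarrow> y \<in> carrier G \<Longrightarrow> f (x \<otimes> y) = f x \<otimes> f y"
  by (auto simp: auto_def hom_def)

lemma auto_compose: "f \<in> auto G \<Longrightarrow> g \<in> auto G \<Longrightarrow> compose (carrier G) f g \<in> auto G"
  using subgroup.m_closed[OF subgroup_auto, of f g]
  by (auto simp: BijGroup_def auto_def)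

lemma auto_inv: "f \<in> auto G \<Longrightarrow> restrict (inv_into (carrier G) f) (carrier G) \<in> auto G"
  using subgroup.m_inv_closed[OF subgroup_auto, of f]
  by (auto simp: inv_BijGroup auto_def)

lemma auto_inv_compose: "f \<in> auto G \<Longrightarrow> compose (carrier G) (restrict (inv_into (carrier G) f) (carrier G)) f = (\<lambda>x\<in>carrier G. x)"
  by (simp add: Bij_compose_restrict_eq auto_def)

lemma auto_one: "f \<in> auto G \<Longrightarrow> f \<one> = \<one>"
  by (auto simp: auto_def intro: hom_one[of f G G] group_hom.intro group_hom_axioms.intro is_group)

lemma auto_ext: "f \<in> auto G \<Longrightarrow> f \<in> extensional (carrier G)"
  by (auto simp: auto_def Bij_def)

lemma auto_funcset: "f \<in> auto G \<Longrightarrow> f \<in> carrier G \<rightarrow> carrier G"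
  by (auto simp: auto_def hom_def)

lemma compose_id_left: "f \<in> auto G \<Longrightarrow> compose (carrier G) (\<lambda>x\<in>carrier G. x) f = f"
  using auto_ext auto_funcset
  by (fastforce simp: compose_def extensional_def restrict_def fun_eq_iff Pi_def)

lemma hol_group: "group (holomorph G)"
proof (rule groupI)
  fix x y assume "x \<in> carrier (holomorph G)" "y \<in> carrier (holomorph G)"
  then show "x \<otimes>\<^bsub>holomorph G\<^esub> y \<in> carrier (holomorph G)"
    by (auto simp: holomorph_def auto_closed auto_compose)
next
  show "\<one>\<^bsub>holomorph G\<^esub> \<in> carrier (holomorph G)"
    by (simp add: holomorph_def id_in_auto)
next
  fix x y z assume "x \<in> carrier (holomorph G)" "y \<in> carrier (holomorph G)" "z \<in> carrier (holomorph G)"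
  then show "x \<otimes>\<^bsub>holomorph G\<^esub> y \<otimes>\<^bsub>holomorph G\<^esub> z = x \<otimes>\<^bsub>holomorph G\<^esub> (y \<otimes>\<^bsub>holomorph G\<^esub> z)"
    by (auto simp: holomorph_def auto_closed auto_mult compose_eq m_assoc compose_assoc[symmetric] auto_funcset)
next
  fix x assume "x \<in> carrier (holomorph G)"
  then show "\<one>\<^bsub>holomorph G\<^esub> \<otimes>\<^bsub>holomorph G\<^esub> x = x"
    by (auto simp: holomorph_def compose_id_left)
next
  fix x assume x: "x \<in> carrier (holomorph G)"
  then obtain \<eta> f where xe: "x = (\<eta>, f)" and e: "\<eta> \<in> carrier G" and f: "f \<in> auto G"
    by (auto simp: holomorph_def)
  define f' where "f' = restrict (inv_into (carrier G) f) (carrier G)"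
  have f': "f' \<in> auto G" using auto_inv[OF f] by (simp add: f'_def)
  have "(f' (inv \<eta>), f') \<in> carrier (holomorph G)"
    using f' e by (simp add: holomorph_def auto_closed)
  moreover have "(f' (inv \<eta>), f') \<otimes>\<^bsub>holomorph G\<^esub> x = \<one>\<^bsub>holomorph G\<^esub>"
  proof -
    have "f' (inv \<eta>) \<otimes> f' \<eta> = f' (inv \<eta> \<otimes> \<eta>)" using auto_mult[OF f', of "inv \<eta>" \<eta>] e by simp
    also have "\<dots> = \<one>" using e auto_one[OF f'] by simp
    finally show ?thesis using auto_inv_compose[OF f] by (simp add: xe holomorph_def f'_def)
  qed
  ultimately show "\<exists>y\<in>carrier (holomorph G). y \<otimes>\<^bsub>holomorph G\<^esub> x = \<one>\<^bsub>holomorph G\<^esub>" by blast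
qed


lemma hol_carrier: "h \<in> carrier (holomorph G) \<longleftrightarrow> fst h \<in> carrier G \<and> snd h \<in> auto G"
  by (cases h) (simp add: holomorph_def)

lemma act_closed: "h \<in> carrier (holomorph G) \<Longrightarrow> x \<in> carrier G \<Longrightarrow> hol_action G h x \<in> carrier G"
  by (simp add: hol_carrier hol_action_def auto_closed)

lemma act_mult: "h \<in> carrier (holomorph G) \<Longrightarrow> h' \<in> carrier (holomorph G) \<Longrightarrow> x \<in> carrier G \<Longrightarrow>
   hol_action G (h \<otimes>\<^bsub>holomorph G\<^esub> h') x = hol_action G h (hol_action G h' x)"
  by (cases h, cases h') (auto simp: holomorph_def hol_action_def compose_eq auto_mult auto_closed m_assoc)

lemma act_one: "x \<in> carrier G \<Longrightarrow> hol_action G \<one>\<^bsub>holomorph G\<^esub> x = x"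
  by (simp add: holomorph_def hol_action_def)

lemma act_pow: "h \<in> carrier (holomorph G) \<Longrightarrow> x \<in> carrier G \<Longrightarrow>
   hol_action G (h [^]\<^bsub>holomorph G\<^esub> (m::nat)) x = (hol_action G h ^^ m) x"
proof (induction m arbitrary: x)
  case 0 then show ?case by (simp add: act_one)
next
  case (Suc m)
  have "hol_action G (h [^]\<^bsub>holomorph G\<^esub> Suc m) x = hol_action G (h [^]\<^bsub>holomorph G\<^esub> m) (hol_action G h x)"
    unfolding monoid.nat_pow_Suc[OF group.is_monoid[OF hol_group]]
    by (rule act_mult[OF monoid.nat_pow_closed[OF group.is_monoid[OF hol_group] Suc.prems(1)] Suc.prems])
  also have "\<dots> = (hol_action G h ^^ m) (hol_action G h x)" using Suc by (simp add: act_closed)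
  finally show ?case by (simp only: funpow_Suc_right o_apply)
qed

lemma act_inj: "h \<in> carrier (holomorph G) \<Longrightarrow> h' \<in> carrier (holomorph G) \<Longrightarrow>
   (\<And>x. x \<in> carrier G \<Longrightarrow> hol_action G h x = hol_action G h' x) \<Longrightarrow> h = h'"
proof -
  assume h: "h \<in> carrier (holomorph G)" and h': "h' \<in> carrier (holomorph G)"
    and eq: "\<And>x. x \<in> carrier G \<Longrightarrow> hol_action G h x = hol_action G h' x"
  obtain \<eta> f \<eta>' f' where hh: "h = (\<eta>, f)" "h' = (\<eta>', f')" by (cases h, cases h')
  have c: "\<eta> \<in> carrier G" "\<eta>' \<in> carrier G" "f \<in> auto G" "f' \<in> auto G"
    using h h' by (auto simp: hh hol_carrier)
  have e: "\<eta> = \<eta>'" using eq[of \<one>] c by (simp add: hh hol_action_def auto_one)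
  have "f x = f' x" if "x \<in> carrier G" for x
    using eq[OF that] c that e by (simp add: hh hol_action_def auto_closed)
  then have "f = f'" by (intro extensionalityI[OF auto_ext[OF c(3)] auto_ext[OF c(4)]])
  then show "h = h'" using e hh by simp
qed

lemma coords:
  assumes g: "g \<in> carrier G" and cyc: "carrier G = range (\<lambda>k::int. g [^] k)"
    and h: "h \<in> carrier (holomorph G)"
  shows "\<exists>a b. (\<forall>k::int. hol_action G h (g [^] k) = g [^] (b + a * k)) \<and> (\<exists>j. int (ord g) dvd (a * j - 1))"
proof -
  obtain \<eta> f where hh: "h = (\<eta>, f)" by (cases h)
  have c: "\<eta> \<in> carrier G" "f \<in> auto G" using h by (auto simp: hh hol_carrier)
  obtain b :: int where b: "\<eta> = g [^] b" using c cyc by auto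
  obtain a :: int where a: "f g = g [^] a" using auto_closed[OF c(2) g] cyc by auto
  have hom: "f \<in> hom G G" using c by (simp add: auto_def)
  have fk: "f (g [^] k) = g [^] (a * k)" for k :: int
    using hom_int_pow[OF hom g is_group is_group, of k] a by (simp add: int_pow_pow g)
  have act: "hol_action G h (g [^] k) = g [^] (b + a * k)" for k :: int
    by (simp add: hh hol_action_def fk b int_pow_mult g)
  have "g \<in> f ` carrier G" using c(2) g by (auto simp: auto_def Bij_def bij_betw_def)
  then obtain x where x: "x \<in> carrier G" "g = f x" by auto
  obtain j :: int where xj: "x = g [^] j" using x(1) cyc by auto
  have "g = f (g [^] j)" using x(2) xj by metis
  then have "g [^] (1::int) = g [^] (a * j)" using fk g by simp
  then have "int (ord g) dvd (a * j - 1)" using int_pow_eq[OF g] by simp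
  with act show ?thesis by blast
qed

end



definition S :: "int \<Rightarrow> nat \<Rightarrow> int" where "S a m = (\<Sum>i<m. a^i)"

lemma S_0 [simp]: "S a 0 = 0"
  by (simp add: S_def)

lemma S_Suc: "S a (Suc m) = S a m + a^m"
  by (simp add: S_def)

lemma S_Suc': "S a (Suc m) = 1 + a * S a m"
  unfolding S_def sum.lessThan_Suc_shift by (simp add: sum_distrib_left)

lemma S_add: "S a (m + q) = S a m + a^m * S a q"
  by (induction q) (auto simp: S_Suc algebra_simps power_add)

lemma S_mult: "S a (m * q) = S a m * S (a^m) q"
proof (induction q)
  case 0 then show ?case by simp
next
  case (Suc q)
  have "S a (m * Suc q) = S a (m * q + m)" by (simp add: add.commute)
  also have "\<dots> = S a (m * q) + a^(m*q) * S a m" by (rule S_add)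
  finally show ?case using Suc by (simp add: S_Suc power_mult algebra_simps)
qed

lemma geom: "a^m - 1 = (a - 1) * S a m"
  by (simp add: S_def power_diff_1_eq)

lemma binom_approx: "\<exists>r. (1 + t::int)^i = 1 + int i * t + t^2 * r"
proof (induction i)
  case 0 then show ?case by simp
next
  case (Suc i)
  then obtain r where r: "(1 + t)^i = 1 + int i * t + t^2 * r" by blast
  have "(1 + t)^Suc i = 1 + int (Suc i) * t + t^2 * (int i + r + r * t)"
    by (simp add: r algebra_simps power2_eq_square)
  then show ?case by blast
qed

lemma sum_approx: "\<exists>R. S (1 + t) m = int m + t * (\<Sum>i<m. int i) + t^2 * R"
proof (induction m)
  case 0 then show ?case by (simp add: S_def)
next
  case (Suc m)
  then obtain R where R: "S (1 + t) m = int m + t * (\<Sum>i<m. int i) + t^2 * R" by blast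
  obtain r where r: "(1 + t)^m = 1 + int m * t + t^2 * r" using binom_approx by blast
  have "S (1 + t) (Suc m) = int (Suc m) + t * (\<Sum>i<Suc m. int i) + t^2 * (R + r)"
    by (simp add: S_Suc R r algebra_simps)
  then show ?case by blast
qed

lemma gauss: "2 * (\<Sum>i<m. int i) = int m * (int m - 1)"
  by (induction m) (auto simp: algebra_simps)

lemma Sp:
  assumes "odd p" and "int p dvd t"
  shows "\<exists>z. S (1 + t) p = int p * (1 + int p * z)"
proof -
  obtain w where w: "t = int p * w" using assms by (auto simp: dvd_def)
  obtain q where q: "p = 2 * q + 1" using assms oddE by blast
  have "2 * (\<Sum>i<p. int i) = 2 * (int p * int q)" using gauss[of p] q by simp
  then have g: "(\<Sum>i<p. int i) = int p * int q" by simp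
  obtain R where R: "S (1 + t) p = int p + t * (\<Sum>i<p. int i) + t^2 * R" using sum_approx by blast
  have "S (1 + t) p = int p + t * (\<Sum>i<p. int i) + t^2 * R" by (rule R)
  also have "\<dots> = int p * (1 + int p * (w * int q + w^2 * R))"
    by (simp add: g w algebra_simps power2_eq_square)
  finally have "S (1 + t) p = int p * (1 + int p * (w * int q + w^2 * R))" .
  then show ?thesis by blast
qed

lemma S_ppow:
  assumes "odd p" and "int p dvd (a - 1)"
  shows "\<exists>u. S a (p^k) = int p ^ k * (1 + int p * u)"
proof (induction k)
  case 0 then show ?case by (auto simp: S_def)
next
  case (Suc k)
  then obtain u where u: "S a (p^k) = int p ^ k * (1 + int p * u)" by blast
  define c where "c = a ^ (p^k)"
  have "c - 1 = (a - 1) * S a (p^k)" by (simp add: c_def geom)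
  then have "int p dvd (c - 1)" using assms(2) by simp
  then obtain z where z: "S (1 + (c - 1)) p = int p * (1 + int p * z)" using Sp[OF assms(1)] by blast
  have "S a (p^Suc k) = S a (p^k * p)" by (simp add: mult.commute)
  also have "\<dots> = S a (p^k) * S c p" by (simp only: S_mult c_def)
  finally have "S a (p^Suc k) = S a (p^k) * S c p" .
  also have "\<dots> = int p ^ Suc k * (1 + int p * (u + z + int p * u * z))"
    using z by (simp add: u algebra_simps)
  finally show ?case by blast
qed

lemma C1:
  assumes "odd p" and "int p dvd (a - 1)"
  shows "int p ^ e dvd S a (p^e)" "int p ^ e dvd (a^(p^e) - 1)"
proof -
  obtain u where u: "S a (p^e) = int p ^ e * (1 + int p * u)" using S_ppow[OF assms] by blast
  then show "int p ^ e dvd S a (p^e)" by simp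
  then show "int p ^ e dvd (a^(p^e) - 1)" by (simp add: geom)
qed

lemma C2:
  assumes "prime p" "odd p" and "int p dvd (a - 1)" and "e \<ge> 1" and "\<not> int p dvd b"
  shows "\<not> int p ^ e dvd b * S a (p^(e - 1))"
proof
  assume d: "int p ^ e dvd b * S a (p^(e - 1))"
  obtain u where u: "S a (p^(e-1)) = int p ^ (e-1) * (1 + int p * u)" using S_ppow[OF assms(2,3)] by blast
  have pe: "int p ^ e = int p ^ (e - 1) * int p" using assms(4)
    by (metis Suc_diff_1 less_le_trans not_one_le_zero not_less power_Suc2)
  have eq: "b * S a (p^(e-1)) = int p ^ (e-1) * (b * (1 + int p * u))" unfolding u by (simp add: algebra_simps)
  have "int p ^ (e-1) * int p dvd int p ^ (e-1) * (b * (1 + int p * u))"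
    using d unfolding eq pe .
  then have "int p dvd b * (1 + int p * u)" using assms(1)
    by (subst (asm) dvd_mult_cancel_left) (auto simp: prime_gt_0_nat)
  then have "int p dvd b \<or> int p dvd (1 + int p * u)"
    using assms(1) by (simp add: prime_dvd_mult_iff)
  moreover have "\<not> int p dvd (1 + int p * u)"
  proof
    assume "int p dvd (1 + int p * u)"
    then have "int p dvd 1" using dvd_add_left_iff[of "int p" "int p * u" 1] by simp
    then show False using assms(1) by simp
  qed
  ultimately show False using assms(5) by blast
qed

lemma iter_formula: "((\<lambda>k::int. b + a * k) ^^ m) k = a^m * k + b * S a m"
  by (induction m) (auto simp: S_Suc' algebra_simps)




lemma act_iter:
  assumes "group N" and co: "\<forall>k::int. hol_action N h (g [^]\<^bsub>N\<^esub> k) = g [^]\<^bsub>N\<^esub> (b + a * k)"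
  shows "(hol_action N h ^^ m) (g [^]\<^bsub>N\<^esub> (k::int)) = g [^]\<^bsub>N\<^esub> (((\<lambda>k::int. b + a * k) ^^ m) k)"
  by (induction m) (simp_all add: co)

theorem lemma4p1:
  fixes N :: "('a, 'b) monoid_scheme" and p e :: nat
  assumes "group N" and "cyclic_group N"
    and "prime p" and "odd p" and "e \<ge> 2"
    and "finite (carrier N)" and "card (carrier N) = p ^ e"
    and "subgroup H (holomorph N)" and "transitive_on_N N H"
  shows "\<exists>h\<in>H. group.ord (holomorph N) h = p ^ e"
proof -
  interpret N: group N by fact
  interpret Hol: group "holomorph N" by (rule N.hol_group)
  interpret Hs: subgroup H "holomorph N" by fact
  obtain g where g: "g \<in> carrier N" and cyc: "carrier N = range (\<lambda>k::int. g [^]\<^bsub>N\<^esub> k)"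
    using assms(2) N.cyclic_group by blast
  have "N.ord g = card (generate N {g})" using N.generate_pow_card[OF g] .
  also have "generate N {g} = carrier N" using N.generate_pow[OF g] cyc by auto
  finally have ordg: "N.ord g = p ^ e" using assms(7) by simp
  define n :: int where "n = int p ^ e"
  have geq: "g [^]\<^bsub>N\<^esub> i = g [^]\<^bsub>N\<^esub> j \<longleftrightarrow> n dvd (j - i)" for i j :: int
    using N.int_pow_eq[OF g] ordg by (simp add: n_def)
  have pn: "int p dvd n" using assms(5) by (simp add: n_def)
  have pp: "prime (int p)" using assms(3) by simp
  define co where "co h a b \<longleftrightarrow> (\<forall>k::int. hol_action N h (g [^]\<^bsub>N\<^esub> k) = g [^]\<^bsub>N\<^esub> (b + a * k)) \<and> (\<exists>j. n dvd (a * j - 1))" for h a b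
  have coex: "\<exists>a b. co h a b" if "h \<in> carrier (holomorph N)" for h
    using N.coords[OF g cyc that] ordg by (simp add: co_def n_def)
  have g0: "\<one>\<^bsub>N\<^esub> = g [^]\<^bsub>N\<^esub> (0::int)" by simp
  have g1: "g = g [^]\<^bsub>N\<^esub> (1::int)" using g by simp
  have trans: "\<exists>h\<in>H. hol_action N h (g [^]\<^bsub>N\<^esub> (x::int)) = g [^]\<^bsub>N\<^esub> (y::int)" for x y
    using assms(9) g by (simp add: transitive_on_N_def)
  have A: "\<exists>h\<in>H. \<exists>a b. co h a b \<and> int p dvd (a - 1) \<and> \<not> int p dvd b"
  proof (cases "\<forall>h\<in>H. \<forall>a b. co h a b \<longrightarrow> int p dvd (a - 1)")
    case True
    obtain h where h: "h \<in> H" "hol_action N h (g [^]\<^bsub>N\<^esub> (0::int)) = g [^]\<^bsub>N\<^esub> (1::int)"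
      using trans by blast
    obtain a b where ab: "co h a b" using coex h(1) Hs.subset by blast
    have "hol_action N h (g [^]\<^bsub>N\<^esub> (0::int)) = g [^]\<^bsub>N\<^esub> (b + a * 0)" using ab unfolding co_def by blast
    then have "g [^]\<^bsub>N\<^esub> b = g [^]\<^bsub>N\<^esub> (1::int)" using h(2) by simp
    then have "n dvd (1 - b)" using geq by blast
    then have "int p dvd (1 - b)" using pn dvd_trans by blast
    moreover have "\<not> int p dvd 1" using pp prime_gt_1_int by fastforce
    ultimately have "\<not> int p dvd b" using dvd_add[of "int p" "1 - b" b] by auto
    then show ?thesis using True h(1) ab by blast
  next
    case False
    then obtain h1 a1 b1 where h1: "h1 \<in> H" "co h1 a1 b1" and na: "\<not> int p dvd (a1 - 1)" by blast
    have "coprime (int p) (a1 - 1)" using prime_imp_coprime[OF pp na] .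
    then have "coprime (a1 - 1) n" by (simp add: n_def coprime_commute)
    then obtain u v where uv: "u * (a1 - 1) + v * n = 1" using bezout_int[of "a1 - 1" n] by auto
    define x0 where "x0 = - b1 * u"
    have F1: "n dvd ((a1 - 1) * x0 + b1)"
    proof -
      have vn: "v * n = 1 - u * (a1 - 1)" using uv by linarith
      have "(a1 - 1) * x0 + b1 = b1 * (1 - u * (a1 - 1))" by (simp add: x0_def algebra_simps)
      also have "\<dots> = n * (b1 * v)" by (simp add: vn[symmetric])
      finally have "(a1 - 1) * x0 + b1 = n * (b1 * v)" .
      then show ?thesis by simp
    qed
    obtain h2 where h2: "h2 \<in> H" "hol_action N h2 (g [^]\<^bsub>N\<^esub> x0) = g [^]\<^bsub>N\<^esub> (x0 + 1)"
      using trans by blast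
    obtain a2 b2 where co2: "co h2 a2 b2" using coex h2(1) Hs.subset by blast
    have "g [^]\<^bsub>N\<^esub> (b2 + a2 * x0) = g [^]\<^bsub>N\<^esub> (x0 + 1)" using co2 h2(2) by (simp add: co_def)
    then have F2: "n dvd (x0 + 1 - b2 - a2 * x0)" using geq by (simp add: algebra_simps)
    define c where "c = h1 \<otimes>\<^bsub>holomorph N\<^esub> h2 \<otimes>\<^bsub>holomorph N\<^esub> inv\<^bsub>holomorph N\<^esub> (h2 \<otimes>\<^bsub>holomorph N\<^esub> h1)"
    have cH: "c \<in> H" using h1(1) h2(1) by (simp add: c_def Hs.m_closed Hs.m_inv_closed)
    have H1: "h1 \<in> carrier (holomorph N)" "h2 \<in> carrier (holomorph N)" "c \<in> carrier (holomorph N)"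
      using h1(1) h2(1) cH Hs.subset by auto
    obtain ac bc where coc: "co c ac bc" using coex H1(3) by blast
    have ceq: "c \<otimes>\<^bsub>holomorph N\<^esub> (h2 \<otimes>\<^bsub>holomorph N\<^esub> h1) = h1 \<otimes>\<^bsub>holomorph N\<^esub> h2"
      using H1 by (simp add: c_def Hol.m_assoc)
    have D: "n dvd ((b1 + a1 * (b2 + a2 * k)) - (bc + ac * (b2 + a2 * (b1 + a1 * k))))" for k :: int
    proof -
      have "hol_action N (c \<otimes>\<^bsub>holomorph N\<^esub> (h2 \<otimes>\<^bsub>holomorph N\<^esub> h1)) (g [^]\<^bsub>N\<^esub> k)
          = hol_action N (h1 \<otimes>\<^bsub>holomorph N\<^esub> h2) (g [^]\<^bsub>N\<^esub> k)" using ceq by simp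
      then have "g [^]\<^bsub>N\<^esub> (bc + ac * (b2 + a2 * (b1 + a1 * k))) = g [^]\<^bsub>N\<^esub> (b1 + a1 * (b2 + a2 * k))"
        using H1 g h1(2) co2 coc by (simp add: N.act_mult Hol.m_closed N.act_closed co_def)
      then show ?thesis using geq by blast
    qed

    obtain j1 where j1: "n dvd (a1 * j1 - 1)" using h1(2) by (auto simp: co_def)
    obtain j2 where j2: "n dvd (a2 * j2 - 1)" using co2 by (auto simp: co_def)
    have "n dvd (a1 * a2 * (1 - ac))"
    proof -
      have "a1 * a2 * (1 - ac) = ((b1 + a1 * (b2 + a2 * 1)) - (bc + ac * (b2 + a2 * (b1 + a1 * 1))))
         - ((b1 + a1 * (b2 + a2 * 0)) - (bc + ac * (b2 + a2 * (b1 + a1 * 0))))" by (simp add: algebra_simps)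
      then show ?thesis using D[of 0] D[of 1] by (metis dvd_diff)
    qed
    then have E1: "n dvd (1 - ac)"
    proof -
      assume d: "n dvd (a1 * a2 * (1 - ac))"
      have "1 - ac = - (1 - ac) * ((a1 * j1 - 1) + a1 * j1 * (a2 * j2 - 1)) + j1 * j2 * (a1 * a2 * (1 - ac))"
        by (simp add: algebra_simps)
      then show ?thesis using d j1 j2 by (metis dvd_add dvd_mult dvd_mult2)
    qed
    have T: "bc - (a1 - 1) = - ((b1 + a1 * (b2 + a2 * 0)) - (bc + ac * (b2 + a2 * (b1 + a1 * 0))))
       + (1 - ac) * (b2 + a2 * b1) + ((a1 - 1) * x0 + b1) * (1 - a2) - (x0 + 1 - b2 - a2 * x0) * (a1 - 1)"
      by (simp add: algebra_simps)
    have "n dvd (bc - (a1 - 1))"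
    proof -
      have t1: "n dvd - ((b1 + a1 * (b2 + a2 * 0)) - (bc + ac * (b2 + a2 * (b1 + a1 * 0))))"
        using D[of 0] by (simp only: dvd_minus_iff)
      have t2: "n dvd (1 - ac) * (b2 + a2 * b1)" using E1 by (rule dvd_mult2)
      have t3: "n dvd ((a1 - 1) * x0 + b1) * (1 - a2)" using F1 by (rule dvd_mult2)
      have t4: "n dvd (x0 + 1 - b2 - a2 * x0) * (a1 - 1)" using F2 by (rule dvd_mult2)
      show ?thesis unfolding T by (rule dvd_diff[OF dvd_add[OF dvd_add[OF t1 t2] t3] t4])
    qed
    then have "int p dvd (bc - (a1 - 1))" using pn dvd_trans by blast
    then have nb: "\<not> int p dvd bc" using na dvd_diff[of "int p" bc "bc - (a1 - 1)"] by auto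
    have "int p dvd (ac - 1)" using E1 pn dvd_trans by (metis dvd_minus_iff minus_diff_eq)
    then show ?thesis using cH coc nb by blast
  qed
  obtain h a b where h: "h \<in> H" "co h a b" and a1: "int p dvd (a - 1)" and nb: "\<not> int p dvd b"
    using A by blast
  have hc: "h \<in> carrier (holomorph N)" using h Hs.subset by auto
  have pw: "h [^]\<^bsub>holomorph N\<^esub> m = \<one>\<^bsub>holomorph N\<^esub> \<longleftrightarrow> n dvd (a^m - 1) \<and> n dvd (b * S a m)" for m :: nat
  proof -
    have hm: "h [^]\<^bsub>holomorph N\<^esub> m \<in> carrier (holomorph N)" using hc by simp
    have ak: "hol_action N (h [^]\<^bsub>holomorph N\<^esub> m) (g [^]\<^bsub>N\<^esub> k) = g [^]\<^bsub>N\<^esub> (a^m * k + b * S a m)" for k :: int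
      using N.act_pow[OF hc, of "g [^]\<^bsub>N\<^esub> k" m] act_iter[OF assms(1), of h g b a m k] h(2) g
      by (simp add: co_def iter_formula)
    have "h [^]\<^bsub>holomorph N\<^esub> m = \<one>\<^bsub>holomorph N\<^esub> \<longleftrightarrow> (\<forall>k::int. n dvd (k - (a^m * k + b * S a m)))"
    proof
      assume "h [^]\<^bsub>holomorph N\<^esub> m = \<one>\<^bsub>holomorph N\<^esub>"
      then have "g [^]\<^bsub>N\<^esub> (a^m * k + b * S a m) = g [^]\<^bsub>N\<^esub> k" for k :: int
        using ak[of k] N.act_one[of "g [^]\<^bsub>N\<^esub> k"] g by simp
      then show "\<forall>k::int. n dvd (k - (a^m * k + b * S a m))" using geq by blast
    next
      assume k: "\<forall>k::int. n dvd (k - (a^m * k + b * S a m))"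
      show "h [^]\<^bsub>holomorph N\<^esub> m = \<one>\<^bsub>holomorph N\<^esub>"
      proof (rule N.act_inj[OF hm Hol.one_closed])
        fix x assume "x \<in> carrier N"
        then obtain k :: int where x: "x = g [^]\<^bsub>N\<^esub> k" using cyc by auto
        show "hol_action N (h [^]\<^bsub>holomorph N\<^esub> m) x = hol_action N \<one>\<^bsub>holomorph N\<^esub> x"
          using ak[of k] k geq[of "a^m * k + b * S a m" k] N.act_one g by (simp add: x)
      qed
    qed
    also have "\<dots> \<longleftrightarrow> n dvd (a^m - 1) \<and> n dvd (b * S a m)"
    proof
      assume k: "\<forall>k::int. n dvd (k - (a^m * k + b * S a m))"
      have 0: "n dvd (b * S a m)" using k[rule_format, of 0] by simp
      have "n dvd (1 - (a^m + b * S a m))" using k[rule_format, of 1] by simp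
      then have "n dvd ((1 - (a^m + b * S a m)) + b * S a m)" using 0 dvd_add by blast
      then have "n dvd (a^m - 1)" by (metis dvd_minus_iff minus_diff_eq add_diff_cancel_right' diff_diff_eq2 diff_add_eq)
      with 0 show "n dvd (a^m - 1) \<and> n dvd (b * S a m)" by blast
    next
      assume "n dvd (a^m - 1) \<and> n dvd (b * S a m)"
      then show "\<forall>k::int. n dvd (k - (a^m * k + b * S a m))"
      proof (intro allI)
        fix k :: int
        assume d: "n dvd (a^m - 1) \<and> n dvd (b * S a m)"
        have eq: "k - (a^m * k + b * S a m) = - ((a^m - 1) * k) - b * S a m" by (simp add: algebra_simps)
        have "n dvd (a^m - 1) * k" using d by (simp add: dvd_mult2)
        then have "n dvd - ((a^m - 1) * k)" by (simp only: dvd_minus_iff)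
        then show "n dvd (k - (a^m * k + b * S a m))" unfolding eq using d by (intro dvd_diff) auto
      qed
    qed
    finally show ?thesis .
  qed
  have "h [^]\<^bsub>holomorph N\<^esub> (p^e) = \<one>\<^bsub>holomorph N\<^esub>"
    using pw C1[OF assms(4) a1, of e] by (simp add: n_def)
  then have "Hol.ord h dvd p^e" using Hol.pow_eq_id[OF hc] by simp
  then obtain i where i: "i \<le> e" "Hol.ord h = p ^ i" using divides_primepow_nat[OF assms(3)] by blast
  have "i = e"
  proof (rule ccontr)
    assume "i \<noteq> e"
    then have "p ^ i dvd p ^ (e - 1)" using i(1) by (simp add: le_imp_power_dvd)
    then have "h [^]\<^bsub>holomorph N\<^esub> (p^(e-1)) = \<one>\<^bsub>holomorph N\<^esub>" using Hol.pow_eq_id[OF hc] i(2) by simp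
    then have "n dvd (b * S a (p^(e-1)))" using pw by blast
    then show False using C2[OF assms(3,4) a1 _ nb, of e] assms(5) by (simp add: n_def)
  qed
  then have "Hol.ord h = p ^ e" using i(2) by simp
  then show ?thesis using h(1) by (intro bexI[of _ h])
qed


end
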